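(* Let $\delta\in(0,1)$ and let $I=\{a_1,\dots,a_N\}$ be a set of $N$ real values presented in a uniformly random order. Run the following online procedure: set $A=\emptyset$, $u=N\delta/2$, $M=-\infty$, $L=4\ln(2/\delta)$; for $i=1,\dots,N$, when the $i$-th value $x_i$ arrives, if $x_i>M$ then set $M\leftarrow x_i$ and, if moreover $i\ge u$ and $|A|<L$, add $x_i$ to $A$. At the end output $A$ and $A^*=\max_{x\in A}x$. Then with probability at least $1-\delta$, $A^*=\max(a_1,\dots,a_N)$. *)

theory Defs
  imports "HOL-Probability.Probability" "HOL-Combinatorics.Multiset_Permutations"
begin

text \<open>Parameters: threshold u, cap L, index i of the next arriving value (1-based),
  current maximum M (starting at minus infinity), current set A.\<close>
fun online_run :: "real \<Rightarrow> real \<Rightarrow> nat \<Rightarrow> ereal \<Rightarrow> real set \<Rightarrow> real list \<Rightarrow> real set" where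
  "online_run u L i M A [] = A"
| "online_run u L i M A (x # xs) =
     (if ereal x > M then
        online_run u L (Suc i) (ereal x)
          (if real i \<ge> u \<and> real (card A) < L then insert x A else A) xs
      else online_run u L (Suc i) M A xs)"

definition online_A :: "real \<Rightarrow> real list \<Rightarrow> real set" where
  "online_A \<delta> xs = online_run (real (length xs) * \<delta> / 2) (4 * ln (2 / \<delta>)) 1 (-\<infinity>) {} xs"

text \<open>A* = max of A (as an extended real; minus infinity if A is empty).\<close>
definition online_Astar :: "real \<Rightarrow> real list \<Rightarrow> ereal" where
  "online_Astar \<delta> xs = Sup (ereal ` online_A \<delta> xs)"

end

theory Submission
  imports Defs "HOL-Analysis.Harmonic_Numbers"
begin

fun fr :: "real \<Rightarrow> nat \<Rightarrow> ereal \<Rightarrow> real list \<Rightarrow> nat" where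
  "fr u i M [] = 0"
| "fr u i M (x # xs) =
     (if ereal x > M then (if real i \<ge> u then 1 else 0) + fr u (Suc i) (ereal x) xs
      else fr u (Suc i) M xs)"

fun posn :: "real \<Rightarrow> real list \<Rightarrow> nat" where
  "posn z [] = 0"
| "posn z (x # xs) = (if x = z then 0 else Suc (posn z xs))"

lemma posn_append_in: "z \<in> set ys \<Longrightarrow> posn z (ys @ w) = posn z ys"
  by (induction ys) auto

lemma posn_append_notin: "z \<notin> set ys \<Longrightarrow> posn z (ys @ w) = length ys + posn z w"
  by (induction ys) auto

lemma fr_snoc:
  "fr u i M (xs @ [x]) = fr u i M xs +
     (if ereal x > M \<and> (\<forall>y\<in>set xs. y < x) \<and> u \<le> real (i + length xs) then 1 else 0)"
proof (induction xs arbitrary: i M)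
  case Nil
  then show ?case by simp
next
  case (Cons a xs)
  show ?case
  proof (cases "ereal a > M")
    case True
    then show ?thesis using Cons[of "Suc i" "ereal a"]
      by (auto simp: add_ac) (meson less_trans ereal_less_eq(3) order_less_trans less_ereal.simps(1))+
  next
    case False
    then show ?thesis using Cons[of "Suc i" M]
      by (auto simp: add_ac) (metis not_less_iff_gr_or_eq less_ereal.simps(1) order_less_trans)+
  qed
qed

lemma run_mono: "A \<subseteq> online_run u L i M A xs"
proof (induction xs arbitrary: i M A)
  case Nil
  then show ?case by simp
next
  case (Cons a xs)
  have "A \<subseteq> (if real i \<ge> u \<and> real (card A) < L then insert a A else A)" by auto
  then show ?case using Cons.IH[where i="Suc i" and M="ereal a" and A="(if real i \<ge> u \<and> real (card A) < L then insert a A else A)"]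
    Cons.IH[where i="Suc i" and M=M and A=A] by auto
qed

lemma run_sub: "online_run u L i M A xs \<subseteq> A \<union> set xs"
proof (induction xs arbitrary: i M A)
  case Nil
  then show ?case by simp
next
  case (Cons a xs)
  have "(if real i \<ge> u \<and> real (card A) < L then insert a A else A) \<subseteq> insert a A" by auto
  then show ?case using Cons.IH[where i="Suc i" and M="ereal a" and A="(if real i \<ge> u \<and> real (card A) < L then insert a A else A)"]
    Cons.IH[where i="Suc i" and M=M and A=A] by auto
qed

lemma run_G:
  "z \<in> set xs \<Longrightarrow> \<forall>y\<in>set xs. y \<le> z \<Longrightarrow> M < ereal z \<Longrightarrow> u \<le> real (i + posn z xs)
   \<Longrightarrow> real (card A + fr u i M xs) < L + 1 \<Longrightarrow> finite A \<Longrightarrow> z \<in> online_run u L i M A xs"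
proof (induction xs arbitrary: i M A)
  case Nil
  then show ?case by simp
next
  case (Cons a xs)
  show ?case
  proof (cases "a = z")
    case True
    then have "real (card A) < L" using Cons.prems by auto
    then have "z \<in> online_run u L (Suc i) (ereal z) (insert z A) xs"
      using run_mono[of "insert z A" u L "Suc i" "ereal z" xs] by auto
    then show ?thesis using True Cons.prems \<open>real (card A) < L\<close> by auto
  next
    case False
    then have zin: "z \<in> set xs" and az: "a < z" using Cons.prems by auto
    have up: "u \<le> real (Suc i + posn z xs)" using Cons.prems False by auto
    show ?thesis
    proof (cases "M < ereal a")
      case True
      define A' where "A' = (if u \<le> real i \<and> real (card A) < L then insert a A else A)"
      have "card A' \<le> card A + (if u \<le> real i then 1 else 0)"
        unfolding A'_def using Cons.prems(6) by (auto simp: card_insert_if)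
      then have "real (card A' + fr u (Suc i) (ereal a) xs) < L + 1"
        using Cons.prems(5) True by auto
      moreover have "finite A'" unfolding A'_def using Cons.prems(6) by auto
      ultimately have "z \<in> online_run u L (Suc i) (ereal a) A' xs"
        using Cons.IH[of "ereal a" "Suc i" A'] zin Cons.prems az up by auto
      then show ?thesis using True unfolding A'_def by simp
    next
      case f: False
      have "z \<in> online_run u L (Suc i) M A xs"
        using Cons.IH[of M "Suc i" A] zin Cons.prems f up by auto
      then show ?thesis using f by simp
    qed
  qed
qed

lemma sum_perms_rev:
  "(\<Sum>xs\<in>permutations_of_set T. f xs) = (\<Sum>zs\<in>permutations_of_set T. f (rev zs))"
proof -
  have "(\<Sum>xs\<in>rev ` permutations_of_set T. f xs) = (\<Sum>zs\<in>permutations_of_set T. f (rev zs))"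
    by (subst sum.reindex) (auto simp: inj_on_def)
  then show ?thesis by simp
qed

lemma sum_perms_snoc:
  assumes "finite S" "S \<noteq> {}"
  shows "(\<Sum>xs\<in>permutations_of_set S. f xs) =
         (\<Sum>x\<in>S. \<Sum>ys\<in>permutations_of_set (S - {x}). f (ys @ [x]))"
proof -
  have "(\<Sum>xs\<in>permutations_of_set S. f xs) = (\<Sum>zs\<in>permutations_of_set S. f (rev zs))"
    by (rule sum_perms_rev)
  also have "\<dots> = (\<Sum>zs\<in>(\<Union>x\<in>S. (\<lambda>xs. x # xs) ` permutations_of_set (S - {x})). f (rev zs))"
    using permutations_of_set_nonempty[OF assms(2)] by simp
  also have "\<dots> = (\<Sum>x\<in>S. \<Sum>zs\<in>(\<lambda>xs. x # xs) ` permutations_of_set (S - {x}). f (rev zs))"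
    by (rule sum.UNION_disjoint) (use assms(1) in auto)
  also have "\<dots> = (\<Sum>x\<in>S. \<Sum>zs\<in>permutations_of_set (S - {x}). f (rev zs @ [x]))"
    by (rule sum.cong) (auto simp: sum.reindex)
  also have "\<dots> = (\<Sum>x\<in>S. \<Sum>ys\<in>permutations_of_set (S - {x}). f (ys @ [x]))"
    by (rule sum.cong) (simp, rule sum_perms_rev[symmetric])
  finally show ?thesis .
qed


definition prw :: "real \<Rightarrow> nat \<Rightarrow> real" where
  "prw u n = (\<Prod>j\<in>{1..n}. if u \<le> real j then 1 + 1 / real j else 1)"

lemma prw_Suc: "prw u (Suc n) = prw u n * (if u \<le> real (Suc n) then 1 + 1 / real (Suc n) else 1)"
  unfolding prw_def by (simp add: prod.cl_ivl_Suc)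

lemma max_snoc:
  assumes "finite S" "x \<in> S" "set ys = S - {x}"
  shows "(\<forall>y\<in>set ys. y < x) \<longleftrightarrow> x = Max S"
proof
  assume "\<forall>y\<in>set ys. y < x"
  then have "\<And>y. y \<in> S \<Longrightarrow> y \<le> x" using assms(3)
    by (metis Diff_iff empty_iff insert_iff less_imp_le order_refl)
  then show "x = Max S" using Max_eqI[OF assms(1) _ assms(2)] by metis
next
  assume "x = Max S"
  then show "\<forall>y\<in>set ys. y < x" using assms
    by (metis DiffE Max_ge insertI1 insert_Diff order_neq_le_trans)
qed

lemma E1:
  "finite S \<Longrightarrow> (\<Sum>xs\<in>permutations_of_set S. (2::real) ^ fr u 1 (-\<infinity>) xs) = fact (card S) * prw u (card S)"
proof (induction "card S" arbitrary: S)
  case 0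
  then have "S = {}" by auto
  then show ?case by (simp add: prw_def)
next
  case (Suc n)
  have ne: "S \<noteq> {}" using Suc.hyps(2) by auto
  define c where "c = (u \<le> real (Suc n))"
  have key: "(2::real) ^ fr u 1 (-\<infinity>) (ys @ [x]) = (if x = Max S \<and> c then 2 else 1) * 2 ^ fr u 1 (-\<infinity>) ys"
    if "x \<in> S" "ys \<in> permutations_of_set (S - {x})" for x ys
  proof -
    have sy: "set ys = S - {x}" and ly: "length ys = n"
      using that Suc.hyps(2) Suc.prems by (auto simp: permutations_of_set_def length_finite_permutations_of_set[OF that(2)])
    have "fr u 1 (-\<infinity>) (ys @ [x]) = fr u 1 (-\<infinity>) ys + (if x = Max S \<and> c then 1 else 0)"
      using fr_snoc[of u 1 "-\<infinity>" ys x] max_snoc[OF Suc.prems that(1) sy] ly unfolding c_def by simp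
    then show ?thesis by (auto simp: power_add)
  qed
  have "(\<Sum>xs\<in>permutations_of_set S. (2::real) ^ fr u 1 (-\<infinity>) xs) =
        (\<Sum>x\<in>S. \<Sum>ys\<in>permutations_of_set (S - {x}). (2::real) ^ fr u 1 (-\<infinity>) (ys @ [x]))"
    by (rule sum_perms_snoc[OF Suc.prems ne])
  also have "\<dots> = (\<Sum>x\<in>S. (if x = Max S \<and> c then 2 else 1) * (fact n * prw u n))"
  proof (rule sum.cong)
    fix x assume x: "x \<in> S"
    have cn: "card (S - {x}) = n" using x Suc.hyps(2) Suc.prems by auto
    have "(\<Sum>ys\<in>permutations_of_set (S - {x}). (2::real) ^ fr u 1 (-\<infinity>) (ys @ [x])) =
          (\<Sum>ys\<in>permutations_of_set (S - {x}). (if x = Max S \<and> c then 2 else 1) * 2 ^ fr u 1 (-\<infinity>) ys)"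
      by (rule sum.cong) (use key x in auto)
    also have "\<dots> = (if x = Max S \<and> c then 2 else 1) * (fact n * prw u n)"
      using Suc.hyps(1)[of "S - {x}"] cn Suc.prems by (simp add: sum_distrib_left[symmetric])
    finally show "(\<Sum>ys\<in>permutations_of_set (S - {x}). (2::real) ^ fr u 1 (-\<infinity>) (ys @ [x])) =
          (if x = Max S \<and> c then 2 else 1) * (fact n * prw u n)" .
  qed simp
  also have "\<dots> = (\<Sum>x\<in>S. (if x = Max S \<and> c then 2 else 1)) * (fact n * prw u n)"
    by (simp add: sum_distrib_right)
  also have "(\<Sum>x\<in>S. (if x = Max S \<and> c then 2 else 1::real)) = real (Suc n) + (if c then 1 else 0)"
  proof -
    have mS: "Max S \<in> S" using Suc.prems ne by simp
    have "(\<Sum>x\<in>S. (if x = Max S \<and> c then 2 else 1::real)) =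
          (if c then 2 else 1) + (\<Sum>x\<in>S - {Max S}. (if x = Max S \<and> c then 2 else 1::real))"
      by (subst sum.remove[OF Suc.prems mS]) simp
    also have "(\<Sum>x\<in>S - {Max S}. (if x = Max S \<and> c then 2 else 1::real)) = (\<Sum>x\<in>S - {Max S}. 1)"
      by (rule sum.cong) auto
    also have "(\<Sum>x\<in>S - {Max S}. 1::real) = real n"
      using mS Suc.hyps(2) Suc.prems by simp
    finally show ?thesis by simp
  qed
  finally show ?case
    unfolding Suc.hyps(2)[symmetric] prw_Suc c_def[symmetric]
    by (cases c) (simp_all add: field_simps)
qed

definition cntu :: "real \<Rightarrow> nat \<Rightarrow> real" where
  "cntu u n = real (card {j\<in>{1..n}. real j < u})"

lemma cntu_0: "cntu u 0 = 0" by (simp add: cntu_def)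

lemma cntu_Suc: "cntu u (Suc n) = cntu u n + (if real (Suc n) < u then 1 else 0)"
proof -
  have "{j\<in>{1..Suc n}. real j < u} =
        (if real (Suc n) < u then insert (Suc n) {j\<in>{1..n}. real j < u} else {j\<in>{1..n}. real j < u})"
    by (auto simp: le_Suc_eq)
  then show ?thesis unfolding cntu_def by auto
qed

lemma E2:
  "finite S \<Longrightarrow> S \<noteq> {} \<Longrightarrow>
   (\<Sum>xs\<in>permutations_of_set S. if real (Suc (posn (Max S) xs)) < u then 1 else (0::real))
     = fact (card S - 1) * cntu u (card S)"
proof (induction "card S" arbitrary: S)
  case 0
  then show ?case by auto
next
  case (Suc n)
  define z where "z = Max S"
  have zS: "z \<in> S" using Suc.prems unfolding z_def by simp
  have "(\<Sum>xs\<in>permutations_of_set S. if real (Suc (posn z xs)) < u then 1 else (0::real)) =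
        (\<Sum>x\<in>S. \<Sum>ys\<in>permutations_of_set (S - {x}). if real (Suc (posn z (ys @ [x]))) < u then 1 else (0::real))"
    by (rule sum_perms_snoc[OF Suc.prems])
  also have "\<dots> = (\<Sum>x\<in>S. if x = z then fact n * (if real (Suc n) < u then 1 else 0) else fact (n - 1) * cntu u n)"
  proof (rule sum.cong)
    fix x assume x: "x \<in> S"
    have cn: "card (S - {x}) = n" using x Suc.hyps(2) Suc.prems by auto
    show "(\<Sum>ys\<in>permutations_of_set (S - {x}). if real (Suc (posn z (ys @ [x]))) < u then 1 else (0::real)) =
       (if x = z then fact n * (if real (Suc n) < u then 1 else 0) else fact (n - 1) * cntu u n)"
    proof (cases "x = z")
      case True
      have "(\<Sum>ys\<in>permutations_of_set (S - {x}). if real (Suc (posn z (ys @ [x]))) < u then 1 else (0::real)) =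
            (\<Sum>ys\<in>permutations_of_set (S - {x}). if real (Suc n) < u then 1 else (0::real))"
      proof (rule sum.cong)
        fix ys assume ys: "ys \<in> permutations_of_set (S - {x})"
        then have "z \<notin> set ys" "length ys = n" using True cn
          by (auto simp: permutations_of_set_def length_finite_permutations_of_set[OF ys])
        then show "(if real (Suc (posn z (ys @ [x]))) < u then 1 else (0::real)) = (if real (Suc n) < u then 1 else 0)"
          using True by (simp add: posn_append_notin)
      qed simp
      then show ?thesis using True cn Suc.prems by simp
    next
      case False
      have "(\<Sum>ys\<in>permutations_of_set (S - {x}). if real (Suc (posn z (ys @ [x]))) < u then 1 else (0::real)) =
            (\<Sum>ys\<in>permutations_of_set (S - {x}). if real (Suc (posn (Max (S - {x})) ys)) < u then 1 else (0::real))"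
      proof (rule sum.cong)
        fix ys assume ys: "ys \<in> permutations_of_set (S - {x})"
        then have "z \<in> set ys" using False zS by (auto simp: permutations_of_set_def)
        moreover have "Max (S - {x}) = z" unfolding z_def using Suc.prems zS False z_def
          by (intro Max_eqI) auto
        ultimately show "(if real (Suc (posn z (ys @ [x]))) < u then 1 else (0::real)) =
           (if real (Suc (posn (Max (S - {x})) ys)) < u then 1 else 0)"
          by (simp add: posn_append_in)
      qed simp
      also have "\<dots> = fact (n - 1) * cntu u n"
        using Suc.hyps(1)[of "S - {x}"] cn Suc.prems False zS by auto
      finally show ?thesis using False by simp
    qed
  qed simp
  also have "\<dots> = fact n * (if real (Suc n) < u then 1 else 0) + (\<Sum>x\<in>S - {z}. fact (n - 1) * cntu u n)"
    by (subst sum.remove[OF Suc.prems(1) zS]) (simp add: sum.cong[of "S - {z}" "S - {z}" "\<lambda>x. if x = z then _ else _" "\<lambda>x. _"])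
  also have "\<dots> = fact n * (if real (Suc n) < u then 1 else 0) + real n * fact (n - 1) * cntu u n"
    using zS Suc.hyps(2) Suc.prems by simp
  also have "real n * fact (n - 1) * cntu u n = fact n * cntu u n"
    by (cases n) (simp_all add: cntu_0)
  finally show ?case unfolding z_def using Suc.hyps(2)[symmetric]
    by (simp add: cntu_Suc algebra_simps)
qed

lemma prw_bound: "prw u n \<le> max 1 ((real n + 1) / max 1 u)"
proof (induction n)
  case 0
  then show ?case by (simp add: prw_def)
next
  case (Suc n)
  show ?case
  proof (cases "u \<le> real (Suc n)")
    case False
    have "(real n + 1) / max 1 u \<le> (real (Suc n) + 1) / max 1 u"
      by (intro divide_right_mono) auto
    then show ?thesis using Suc False by (simp add: prw_Suc)
  next
    case True
    define m where "m = max 1 u"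
    have m1: "m \<ge> 1" and mn: "m \<le> real n + 1" using True unfolding m_def by auto
    have "(real n + 1) / m \<ge> 1" using mn m1 by simp
    then have IH: "prw u n \<le> (real n + 1) / m" using Suc.IH unfolding m_def by simp
    have pos: "0 \<le> 1 + 1 / real (Suc n)" by simp
    have "prw u (Suc n) = prw u n * (1 + 1 / real (Suc n))" using True by (simp add: prw_Suc)
    also have "\<dots> \<le> (real n + 1) / m * (1 + 1 / real (Suc n))"
      by (rule mult_right_mono[OF IH pos])
    also have "\<dots> = ((real n + 1) * (1 + 1 / real (Suc n))) / m" by simp
    also have "(real n + 1) * (1 + 1 / real (Suc n)) = real (Suc n) + 1" by (simp add: field_simps)
    finally show ?thesis unfolding m_def by simp
  qed
qed


lemma cntu_le: assumes "0 < u" shows "cntu u n \<le> u"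
proof -
  have "{j\<in>{1..n}. real j < u} \<subseteq> {1..nat (\<lceil>u\<rceil> - 1)}"
  proof
    fix j assume j: "j \<in> {j\<in>{1..n}. real j < u}"
    then have "real_of_int (int j) < u" by simp
    then have "int j < \<lceil>u\<rceil>" by (meson le_of_int_ceiling less_le_trans not_le of_int_less_iff)
    then show "j \<in> {1..nat (\<lceil>u\<rceil> - 1)}" using j by auto
  qed
  then have "card {j\<in>{1..n}. real j < u} \<le> nat (\<lceil>u\<rceil> - 1)"
    using card_mono[of "{1..nat (\<lceil>u\<rceil> - 1)}"] by fastforce
  moreover have "real (nat (\<lceil>u\<rceil> - 1)) \<le> u"
  proof -
    have c1: "\<lceil>u\<rceil> \<ge> 1" using assms by simp
    then have "real (nat (\<lceil>u\<rceil> - 1)) = real_of_int (\<lceil>u\<rceil> - 1)" by simp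
    also have "\<dots> \<le> u" using ceiling_correct[of u] by simp
    finally show ?thesis .
  qed
  ultimately show ?thesis unfolding cntu_def by linarith
qed

lemma card_filter_sum: "finite A \<Longrightarrow> real (card {x\<in>A. Q x}) = (\<Sum>x\<in>A. if Q x then 1 else 0)"
  by (simp add: sum.If_cases Int_def)

theorem proposition1:
  fixes \<delta> :: real and I :: "real set"
  assumes "0 < \<delta>" "\<delta> < 1"
    and "finite I" "I \<noteq> {}"
  shows "measure_pmf.prob (pmf_of_set (permutations_of_set I))
           {xs. online_Astar \<delta> xs = ereal (Max I)} \<ge> 1 - \<delta>"
proof -
  define N where "N = card I"
  define u where "u = real N * \<delta> / 2"
  define L where "L = 4 * ln (2 / \<delta>)"
  define z where "z = Max I"
  define P where "P = permutations_of_set I"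
  define B1 where "B1 = {xs\<in>P. real (Suc (posn z xs)) < u}"
  define B2 where "B2 = {xs\<in>P. L + 1 \<le> real (fr u 1 (-\<infinity>) xs)}"
  have N1: "N \<ge> 1" using assms(3,4) unfolding N_def by (simp add: Suc_leI card_gt_0_iff)
  have u0: "0 < u" using N1 assms(1) unfolding u_def by simp
  have cardP: "card P = fact N" unfolding P_def N_def using assms(3) by simp
  have finP: "finite P" "P \<noteq> {}" unfolding P_def using assms(3) by auto
  have good: "P - (B1 \<union> B2) \<subseteq> {xs. online_Astar \<delta> xs = ereal z}"
  proof
    fix xs assume xs: "xs \<in> P - (B1 \<union> B2)"
    then have sx: "set xs = I" and lx: "length xs = N"
      unfolding P_def N_def by (auto simp: permutations_of_set_def length_finite_permutations_of_set)
    have nb1: "u \<le> real (1 + posn z xs)" using xs unfolding B1_def by auto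
    have nb2: "real (card ({}::real set) + fr u 1 (-\<infinity>) xs) < L + 1" using xs unfolding B2_def by auto
    have zx: "z \<in> set xs" using sx assms(3,4) unfolding z_def by simp
    have le: "\<forall>y\<in>set xs. y \<le> z" using sx assms(3) unfolding z_def by simp
    have A: "online_A \<delta> xs = online_run u L 1 (-\<infinity>) {} xs"
      unfolding online_A_def u_def L_def lx ..
    have zin: "z \<in> online_A \<delta> xs" unfolding A
      by (rule run_G[OF zx le _ nb1 nb2]) simp_all
    have sub: "online_A \<delta> xs \<subseteq> I" unfolding A using run_sub[of u L 1 "-\<infinity>" "{}" xs] sx by simp
    have "Sup (ereal ` online_A \<delta> xs) = ereal z"
    proof (rule Sup_eqI)
      fix y assume "y \<in> ereal ` online_A \<delta> xs"
      then show "y \<le> ereal z" using sub assms(3) unfolding z_def by auto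
    next
      fix y assume "\<And>w. w \<in> ereal ` online_A \<delta> xs \<Longrightarrow> w \<le> y"
      then show "ereal z \<le> y" using zin by auto
    qed
    then show "xs \<in> {xs. online_Astar \<delta> xs = ereal z}" unfolding online_Astar_def by simp
  qed
  have B1b: "real (card B1) \<le> fact N * \<delta> / 2"
  proof -
    have "real (card B1) = (\<Sum>xs\<in>P. if real (Suc (posn z xs)) < u then 1 else (0::real))"
      unfolding B1_def by (rule card_filter_sum[OF finP(1)])
    also have "\<dots> = fact (N - 1) * cntu u N"
      unfolding P_def z_def N_def by (rule E2[OF assms(3,4)])
    also have "\<dots> \<le> fact (N - 1) * u" by (intro mult_left_mono cntu_le u0) simp
    also have "\<dots> = (real N * fact (N - 1)) * \<delta> / 2" unfolding u_def by simp
    also have "real N * fact (N - 1) = fact N" using N1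
      by (metis Suc_diff_1 fact_Suc le_numeral_extra(2) less_le_trans not_less_eq_eq of_nat_Suc of_nat_mult zero_less_Suc of_nat_fact)
    finally show ?thesis .
  qed
  have lnd: "0 < ln (2 / \<delta>)" using assms(1,2) by simp
  have pL: "2 powr L \<ge> (2 / \<delta>)^2"
  proof -
    have "2 powr L = exp ((4 * ln 2) * ln (2 / \<delta>))" unfolding L_def powr_def by (simp add: ac_simps)
    also have "\<dots> \<ge> exp (2 * ln (2 / \<delta>))"
      using ln2_ge_two_thirds lnd by (intro exp_le_cancel_iff[THEN iffD2] mult_right_mono) auto
    also have "exp (2 * ln (2 / \<delta>)) = (2 / \<delta>)^2"
    proof -
      have "ln ((2 / \<delta>)^2) = 2 * ln (2 / \<delta>)" using assms(1) by (simp add: ln_realpow)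
      then have "exp (2 * ln (2 / \<delta>)) = exp (ln ((2 / \<delta>)^2))" by simp
      also have "\<dots> = (2 / \<delta>)^2" using assms(1) by (intro exp_ln) simp
      finally show ?thesis .
    qed
    finally show ?thesis .
  qed
  have B2b: "real (card B2) \<le> fact N * \<delta> / 2"
  proof -
    have "real (card B2) * 2 powr (L + 1) = (\<Sum>xs\<in>B2. 2 powr (L + 1))" by simp
    also have "\<dots> \<le> (\<Sum>xs\<in>B2. (2::real) ^ fr u 1 (-\<infinity>) xs)"
    proof (rule sum_mono)
      fix xs assume "xs \<in> B2"
      then have "2 powr (L + 1) \<le> 2 powr real (fr u 1 (-\<infinity>) xs)" unfolding B2_def by auto
      then show "2 powr (L + 1) \<le> (2::real) ^ fr u 1 (-\<infinity>) xs" by (simp add: powr_realpow)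
    qed
    also have "\<dots> \<le> (\<Sum>xs\<in>P. (2::real) ^ fr u 1 (-\<infinity>) xs)"
      by (rule sum_mono2[OF finP(1)]) (auto simp: B2_def)
    also have "\<dots> = fact N * prw u N" unfolding P_def N_def by (rule E1[OF assms(3)])
    also have "\<dots> \<le> fact N * (4 / \<delta>)"
    proof (intro mult_left_mono)
      have m: "max 1 u \<ge> u" "max 1 u \<ge> 1" by auto
      have "(real N + 1) / max 1 u = real N / max 1 u + 1 / max 1 u" by (simp add: add_divide_distrib)
      also have "real N / max 1 u \<le> real N / u" using m u0 by (intro divide_left_mono) auto
      also have "real N / u = 2 / \<delta>" unfolding u_def using N1 assms(1) by (simp add: field_simps)
      also have "1 / max 1 u \<le> 1" using m by simp
      finally have "(real N + 1) / max 1 u \<le> 2 / \<delta> + 1" by simp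
      also have "\<dots> \<le> 4 / \<delta>" using assms(1,2) by (simp add: field_simps)
      finally have "(real N + 1) / max 1 u \<le> 4 / \<delta>" .
      moreover have "1 \<le> 4 / \<delta>" using assms(1,2) by (simp add: field_simps)
      ultimately show "prw u N \<le> 4 / \<delta>" using prw_bound[of u N] by linarith
    qed simp
    finally have c: "real (card B2) * 2 powr (L + 1) \<le> fact N * (4 / \<delta>)" .
    have "2 powr (L + 1) = 2 * 2 powr L" by (simp add: powr_add)
    then have p8: "2 powr (L + 1) \<ge> 8 / \<delta>^2" using pL by (simp add: power_divide)
    have "real (card B2) * (8 / \<delta>^2) \<le> fact N * (4 / \<delta>)"
      using mult_left_mono[OF p8, of "real (card B2)"] c by simp
    then show ?thesis using assms(1) by (simp add: field_simps power2_eq_square)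
  qed
  have "real (card P) \<le> real (card (P - (B1 \<union> B2))) + real (card B1) + real (card B2)"
  proof -
    have "card P \<le> card ((P - (B1 \<union> B2)) \<union> B1 \<union> B2)"
      by (rule card_mono) (use finP in \<open>auto simp: B1_def B2_def\<close>)
    also have "\<dots> \<le> card (P - (B1 \<union> B2)) + card B1 + card B2"
      by (metis add_le_mono card_Un_le le_refl order_trans)
    finally show ?thesis by linarith
  qed
  then have cg: "real (card (P - (B1 \<union> B2))) \<ge> fact N * (1 - \<delta>)"
    using B1b B2b cardP by (simp add: algebra_simps)
  have "card (P - (B1 \<union> B2)) \<le> card (P \<inter> {xs. online_Astar \<delta> xs = ereal z})"
    by (rule card_mono) (use finP good in auto)
  then have "fact N * (1 - \<delta>) \<le> real (card (P \<inter> {xs. online_Astar \<delta> xs = ereal z}))"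
    using cg by linarith
  then have "1 - \<delta> \<le> real (card (P \<inter> {xs. online_Astar \<delta> xs = ereal z})) / fact N"
    by (simp add: field_simps)
  also have "\<dots> = measure_pmf.prob (pmf_of_set P) {xs. online_Astar \<delta> xs = ereal z}"
    using measure_pmf_of_set[OF finP(2) finP(1)] cardP by simp
  finally show ?thesis unfolding P_def z_def .
qed

end
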